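(* Consider the one-ported gather/scatter tree model described in the context, with arbitrary block sizes $m_i\ge0$ and arbitrary parameters $\alpha_{ij},\beta_{ij},\gamma_i\ge 0$. For a nonempty set $P\subseteq\{0,\dots,p-1\}$ and $r\in P$ let $\mathrm{OPT}(P,r)$ be the minimum completion time of a communication tree on $P$ with root $r$. Then $\mathrm{OPT}(\{q\},q)=0$ for every $q$, and for $|P|\ge 2$, \[ \mathrm{OPT}(P,r)=\min\Big\{\ \min_{r'\in P\setminus\{r\}}\big[\max(\gamma_r m_r,\mathrm{OPT}(P\setminus\{r\},r'))+\alpha_{r'r}+\beta_{r'r}\mathrm{Size}(P\setminus\{r\})\big],\ \ \min_{(R,\bar R),\,r'\in\bar R}\big[\max(\mathrm{OPT}(R,r),\mathrm{OPT}(\bar R,r'))+\alpha_{r'r}+\beta_{r'r}\mathrm{Size}(\bar R)\big]\Big\}, \] where the second minimum ranges over all partitions $P=R\cup\bar R$ into disjoint sets with $r\in R$, $|R|\ge 2$, $\bar R\neq\emptyset$, and over $r'\in\bar R$. (That is, optimal trees have optimal substructure.)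
   Context: There are $p$ processors $0,\dots,p-1$; processor $i$ has a data block of size $m_i\ge 0$. For a set $R$ of processors, $\mathrm{Size}(R)=\sum_{i\in R}m_i$. For every ordered pair of distinct processors $i,j$ there are a start-up latency $\alpha_{ij}\ge 0$ and a time per unit $\beta_{ij}\ge 0$, and each processor $i$ has a local copy cost $\gamma_i\ge0$ per unit. A communication tree on a nonempty finite set $R$ of processors with root $r\in R$ is either the trivial tree (only when $R=\{r\}$), or consists of the root $r$ together with a finite sequence of entries $(E_0,\dots,E_j)$ in which exactly one entry is a special "local copy" marker and every other entry $E_t$ is a communication tree on a set $R_t$ with root $r_t$, there is at least one such tree entry, and the sets $\{r\}$ and the $R_t$ partition $R$. Completion time (one-ported): the trivial tree has cost $0$; otherwise with $c_{-1}=0$, $c_t=c_{t-1}+\gamma_r m_r$ if $E_t$ is the local copy marker and $c_t=\max(c_{t-1},\mathrm{cost}(E_t))+\alpha_{r_t r}+\beta_{r_t r}\,\mathrm{Size}(R_t)$ if $E_t$ is a tree on $R_t$ with root $r_t$; $\mathrm{cost}(T)=c_j$. *)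

theory Defs
  imports Main "HOL.Real"
begin

datatype ctree = CT nat "centry list"
and centry = LocalCopy | Sub ctree

fun root :: "ctree \<Rightarrow> nat" where
  "root (CT r es) = r"

fun nodes :: "ctree \<Rightarrow> nat set" and nodes_e :: "centry \<Rightarrow> nat set" where
  "nodes (CT r es) = {r} \<union> (\<Union>e\<in>set es. nodes_e e)"
| "nodes_e LocalCopy = {}"
| "nodes_e (Sub T) = nodes T"

definition subtrees :: "centry list \<Rightarrow> ctree list" where
  "subtrees es = [T. Sub T \<leftarrow> es]"

fun wf_tree :: "ctree \<Rightarrow> bool" and wf_e :: "centry \<Rightarrow> bool" where
  "wf_tree (CT r es) =
     (es = [] \<or>
      (length (filter (\<lambda>e. e = LocalCopy) es) = 1 \<and>
       subtrees es \<noteq> [] \<and>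
       (\<forall>i j. i < j \<and> j < length (subtrees es) \<longrightarrow>
           nodes (subtrees es ! i) \<inter> nodes (subtrees es ! j) = {}) \<and>
       (\<forall>e\<in>set es. r \<notin> nodes_e e) \<and>
       (\<forall>e\<in>set es. wf_e e)))"
| "wf_e LocalCopy = True"
| "wf_e (Sub T) = wf_tree T"

definition is_tree :: "ctree \<Rightarrow> nat set \<Rightarrow> nat \<Rightarrow> bool" where
  "is_tree T R r \<longleftrightarrow> wf_tree T \<and> nodes T = R \<and> root T = r"

definition Size :: "(nat \<Rightarrow> real) \<Rightarrow> nat set \<Rightarrow> real" where
  "Size m R = (\<Sum>i\<in>R. m i)"

text \<open>One-ported completion time. m: block sizes, al i j = alpha_ij, be i j = beta_ij,
ga i = gamma_i. costs r c es processes entries es of a tree with root r, starting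
from accumulated value c (c_{-1} = 0).\<close>
fun cost :: "(nat \<Rightarrow> real) \<Rightarrow> (nat \<Rightarrow> nat \<Rightarrow> real) \<Rightarrow> (nat \<Rightarrow> nat \<Rightarrow> real) \<Rightarrow> (nat \<Rightarrow> real)
              \<Rightarrow> ctree \<Rightarrow> real"
and costs :: "(nat \<Rightarrow> real) \<Rightarrow> (nat \<Rightarrow> nat \<Rightarrow> real) \<Rightarrow> (nat \<Rightarrow> nat \<Rightarrow> real) \<Rightarrow> (nat \<Rightarrow> real)
              \<Rightarrow> nat \<Rightarrow> real \<Rightarrow> centry list \<Rightarrow> real" where
  "cost m al be ga (CT r es) = costs m al be ga r 0 es"
| "costs m al be ga r c [] = c"
| "costs m al be ga r c (LocalCopy # es) = costs m al be ga r (c + ga r * m r) es"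
| "costs m al be ga r c (Sub T # es) =
     costs m al be ga r
       (max c (cost m al be ga T) + al (root T) r + be (root T) r * Size m (nodes T)) es"

definition OPT :: "(nat \<Rightarrow> real) \<Rightarrow> (nat \<Rightarrow> nat \<Rightarrow> real) \<Rightarrow> (nat \<Rightarrow> nat \<Rightarrow> real) \<Rightarrow> (nat \<Rightarrow> real)
              \<Rightarrow> nat set \<Rightarrow> nat \<Rightarrow> real" where
  "OPT m al be ga P r = Min {cost m al be ga T | T. is_tree T P r}"

end

theory Submission
  imports Defs
begin

lemma subtrees_simps[simp]:
  "subtrees [] = []" "subtrees (LocalCopy # es) = subtrees es"
  "subtrees (Sub T # es) = T # subtrees es" "subtrees (es @ fs) = subtrees es @ subtrees fs"
  by (simp_all add: subtrees_def)

lemma set_subtrees: "set (subtrees es) = {T. Sub T \<in> set es}"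
proof (induction es)
  case (Cons e es) then show ?case by (cases e) auto
qed simp

lemma length_split: "length es = length (filter (\<lambda>e. e = LocalCopy) es) + length (subtrees es)"
proof (induction es)
  case (Cons e es) then show ?case by (cases e) auto
qed simp

lemma root_in: "root T \<in> nodes T"
  by (cases T) auto

lemma sub_nodes: "Sub T' \<in> set es \<Longrightarrow> nodes T' \<subseteq> nodes (CT r es)"
  by force

lemma costs_append: "costs m al be ga r c (es @ fs) = costs m al be ga r (costs m al be ga r c es) fs"
proof (induction es arbitrary: c)
  case (Cons e es) then show ?case by (cases e) auto
qed simp

lemma costs_shift:
  assumes "LocalCopy \<notin> set es" "c' \<le> c + d" "d \<ge> 0"
  shows "costs m al be ga r c' es \<le> costs m al be ga r c es + d"
  using assms
proof (induction es arbitrary: c c')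
  case (Cons e es)
  then obtain T where e: "e = Sub T" by (cases e) auto
  let ?x = "cost m al be ga T" and ?a = "al (root T) r + be (root T) r * Size m (nodes T)"
  have "max c' ?x + ?a \<le> (max c ?x + ?a) + d" using Cons.prems by (auto simp: max_def)
  then show ?case using Cons e by simp
qed simp

lemma disj_nth:
  assumes "\<forall>i j. i < j \<and> j < length xs \<longrightarrow> nodes (xs ! i) \<inter> nodes (xs ! j) = {}"
    "i < length xs" "j < length xs" "i \<noteq> j"
  shows "nodes (xs ! i) \<inter> nodes (xs ! j) = {}"
proof (cases "i < j")
  case True then show ?thesis using assms(1,3) by blast
next
  case False
  then have "j < i" using assms(4) by simp
  then have "nodes (xs ! j) \<inter> nodes (xs ! i) = {}" using assms(1,2) by blast
  then show ?thesis by blast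
qed

lemma wf_append:
  assumes "wf_tree (CT r es)" "es \<noteq> []" "wf_tree T" "nodes T \<inter> nodes (CT r es) = {}"
  shows "wf_tree (CT r (es @ [Sub T]))"
proof -
  have A: "\<forall>i j. i < j \<and> j < length (subtrees es) \<longrightarrow>
           nodes (subtrees es ! i) \<inter> nodes (subtrees es ! j) = {}"
    using assms(1,2) by simp
  have B: "nodes T' \<subseteq> nodes (CT r es)" if "T' \<in> set (subtrees es)" for T'
    using that by (auto simp: set_subtrees)
  have "nodes ((subtrees es @ [T]) ! i) \<inter> nodes ((subtrees es @ [T]) ! j) = {}"
    if "i < j" "j < length (subtrees es @ [T])" for i j
  proof (cases "j < length (subtrees es)")
    case True then show ?thesis using A that by (auto simp: nth_append)
  next
    case False
    then have "j = length (subtrees es)" using that by simp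
    moreover have "subtrees es ! i \<in> set (subtrees es)" using that calculation by simp
    then have "nodes (subtrees es ! i) \<subseteq> nodes (CT r es)" by (rule B)
    ultimately show ?thesis using that assms(4) by (auto simp: nth_append)
  qed
  then have D: "\<forall>i j. i < j \<and> j < length (subtrees (es @ [Sub T])) \<longrightarrow>
           nodes (subtrees (es @ [Sub T]) ! i) \<inter> nodes (subtrees (es @ [Sub T]) ! j) = {}"
    by simp
  have E: "length (filter (\<lambda>e. e = LocalCopy) (es @ [Sub T])) = 1" using assms(1,2) by simp
  have F: "subtrees (es @ [Sub T]) \<noteq> []" by simp
  have G: "\<forall>e\<in>set (es @ [Sub T]). r \<notin> nodes_e e" using assms(1,2,4) by auto
  have H: "\<forall>e\<in>set (es @ [Sub T]). wf_e e" using assms(1,2,3) by auto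
  show ?thesis unfolding wf_tree.simps using D E F G H by blast
qed

lemma wf_two:
  assumes "wf_tree T" "r \<notin> nodes T"
  shows "wf_tree (CT r [LocalCopy, Sub T])"
  using assms by auto

lemma fin_trees: "finite A \<Longrightarrow> finite {T. wf_tree T \<and> nodes T \<subseteq> A}"
proof (induction "card A" arbitrary: A rule: less_induct)
  case less
  define S where "S r = {LocalCopy} \<union> Sub ` {T. wf_tree T \<and> nodes T \<subseteq> A - {r}}" for r
  have finS: "finite (S r)" if "r \<in> A" for r
  proof -
    have "card (A - {r}) < card A" using that less.prems by (rule card_Diff1_less[rotated])
    then show ?thesis using less by (simp add: S_def)
  qed
  have "{T. wf_tree T \<and> nodes T \<subseteq> A} \<subseteq>
        (\<Union>r\<in>A. CT r ` {es. set es \<subseteq> S r \<and> length es \<le> Suc (card A)})"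
  proof
    fix T assume T: "T \<in> {T. wf_tree T \<and> nodes T \<subseteq> A}"
    obtain r es where Te: "T = CT r es" by (cases T)
    have rA: "r \<in> A" using T Te by auto
    have sub: "set es \<subseteq> S r"
    proof
      fix e assume e: "e \<in> set es"
      show "e \<in> S r"
      proof (cases e)
        case LocalCopy then show ?thesis by (simp add: S_def)
      next
        case (Sub T')
        then have se: "Sub T' \<in> set es" using e by simp
        have "nodes (CT r es) \<subseteq> A" using T Te by simp
        then have "nodes T' \<subseteq> A" using sub_nodes[OF se, of r] by blast
        moreover have "wf_e (Sub T')" "r \<notin> nodes_e (Sub T')" using T Te se by auto
        ultimately have "wf_tree T'" "r \<notin> nodes T'" "nodes T' \<subseteq> A" by simp_all
        then show ?thesis using Sub by (auto simp: S_def)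
      qed
    qed
    have len: "length es \<le> Suc (card A)"
    proof (cases "es = []")
      case False
      let ?xs = "subtrees es"
      have d: "\<forall>i j. i < j \<and> j < length ?xs \<longrightarrow> nodes (?xs ! i) \<inter> nodes (?xs ! j) = {}"
        using T Te False by simp
      have "distinct (map root ?xs)"
      proof (subst distinct_conv_nth, intro allI impI)
        fix i j assume ij: "i < length (map root ?xs)" "j < length (map root ?xs)" "i \<noteq> j"
        have dis: "nodes (?xs ! i) \<inter> nodes (?xs ! j) = {}"
          by (rule disj_nth[OF d]) (use ij in simp_all)
        have "root (?xs ! i) \<noteq> root (?xs ! j)"
        proof
          assume eq: "root (?xs ! i) = root (?xs ! j)"
          have "root (?xs ! i) \<in> nodes (?xs ! j)" unfolding eq by (rule root_in)
          then have "root (?xs ! i) \<in> nodes (?xs ! i) \<inter> nodes (?xs ! j)"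
            by (rule IntI[OF root_in])
          then show False unfolding dis by simp
        qed
        then show "map root ?xs ! i \<noteq> map root ?xs ! j" using ij by simp
      qed
      moreover have "set (map root ?xs) \<subseteq> A"
      proof
        fix x assume "x \<in> set (map root ?xs)"
        then obtain T' where "T' \<in> set ?xs" "x = root T'" by auto
        then have "Sub T' \<in> set es" by (simp add: set_subtrees)
        then have "nodes T' \<subseteq> nodes (CT r es)" by (rule sub_nodes)
        then have "nodes T' \<subseteq> A" using T Te by auto
        then show "x \<in> A" using \<open>x = root T'\<close> root_in[of T'] by auto
      qed
      then have "card (set (map root ?xs)) \<le> card A" by (rule card_mono[OF less.prems])
      ultimately have "length ?xs \<le> card A"
        using distinct_card[of "map root ?xs"] by simp
      moreover have "length (filter (\<lambda>e. e = LocalCopy) es) = 1" using T Te False by simp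
      ultimately show ?thesis using length_split[of es] by simp
    qed simp
    show "T \<in> (\<Union>r\<in>A. CT r ` {es. set es \<subseteq> S r \<and> length es \<le> Suc (card A)})"
      using rA sub len Te by blast
  qed
  moreover have "finite (\<Union>r\<in>A. CT r ` {es. set es \<subseteq> S r \<and> length es \<le> Suc (card A)})"
  proof (rule finite_UN_I[OF less.prems])
    fix r assume "r \<in> A"
    show "finite (CT r ` {es. set es \<subseteq> S r \<and> length es \<le> Suc (card A)})"
      using finite_lists_length_le[OF finS[OF \<open>r \<in> A\<close>]] by simp
  qed
  ultimately show ?case by (rule finite_subset)
qed


lemma wf_cong:
  assumes "wf_tree (CT r es)" "subtrees es' = subtrees es" "set es' = set es"
    "length (filter (\<lambda>e. e = LocalCopy) es') = 1"
  shows "wf_tree (CT r es')"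
proof (cases "es = []")
  case True then show ?thesis using assms by auto
next
  case False
  then have "es' \<noteq> []" using assms(3) by auto
  then show ?thesis using assms False by simp
qed

lemma tree_exists: "finite Q \<Longrightarrow> r \<notin> Q \<Longrightarrow> \<exists>T. is_tree T (insert r Q) r"
proof (induction Q rule: finite_induct)
  case empty
  have "is_tree (CT r []) {r} r" by (simp add: is_tree_def)
  then show ?case by blast
next
  case (insert x F)
  then obtain T where T: "is_tree T (insert r F) r" by auto
  then obtain es where Te: "T = CT r es" by (cases T) (auto simp: is_tree_def)
  show ?case
  proof (cases "es = []")
    case True
    then have "F = {}" using T Te insert.prems by (auto simp: is_tree_def)
    then have "is_tree (CT r [LocalCopy, Sub (CT x [])]) (insert r (insert x F)) r"
      using insert by (auto simp: is_tree_def)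
    then show ?thesis by blast
  next
    case False
    have "wf_tree (CT r (es @ [Sub (CT x [])]))"
      by (rule wf_append) (use T Te False insert in \<open>auto simp: is_tree_def\<close>)
    then have "is_tree (CT r (es @ [Sub (CT x [])])) (insert r (insert x F)) r"
      using T Te by (auto simp: is_tree_def)
    then show ?thesis by blast
  qed
qed

lemma tree_exists': "finite P \<Longrightarrow> r \<in> P \<Longrightarrow> \<exists>T. is_tree T P r"
  using tree_exists[of "P - {r}" r] by (simp add: insert_absorb)

lemma opt_fin: "finite P \<Longrightarrow> finite {cost m al be ga T | T. is_tree T P r}"
proof -
  assume "finite P"
  then have "finite (cost m al be ga ` {T. wf_tree T \<and> nodes T \<subseteq> P})" using fin_trees by auto
  moreover have "{cost m al be ga T | T. is_tree T P r} \<subseteq> cost m al be ga ` {T. wf_tree T \<and> nodes T \<subseteq> P}"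
    by (auto simp: is_tree_def)
  ultimately show ?thesis by (rule finite_subset[rotated])
qed

lemma OPT_le: "finite P \<Longrightarrow> is_tree T P r \<Longrightarrow> OPT m al be ga P r \<le> cost m al be ga T"
  unfolding OPT_def by (rule Min_le) (auto intro: opt_fin)

lemma OPT_ex: "finite P \<Longrightarrow> r \<in> P \<Longrightarrow> \<exists>T. is_tree T P r \<and> cost m al be ga T = OPT m al be ga P r"
proof -
  assume a: "finite P" "r \<in> P"
  have "OPT m al be ga P r \<in> {cost m al be ga T | T. is_tree T P r}"
    unfolding OPT_def using opt_fin[OF a(1)] tree_exists'[OF a] by (intro Min_in) auto
  then show ?thesis by auto
qed

lemma single_tree: "is_tree T {q} q \<Longrightarrow> T = CT q []"
proof -
  assume a: "is_tree T {q} q"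
  then obtain es where Te: "T = CT q es" by (cases T) (auto simp: is_tree_def)
  show ?thesis
  proof (rule ccontr)
    assume "T \<noteq> CT q []"
    then have ne: "es \<noteq> []" using Te by simp
    then have "subtrees es \<noteq> []" using a Te by (simp add: is_tree_def)
    then obtain T' where "T' \<in> set (subtrees es)" by (cases "subtrees es") auto
    then have "Sub T' \<in> set es" by (simp add: set_subtrees)
    have rin: "root T' \<in> nodes T'" by (rule root_in)
    have "root T' \<in> nodes T" using Te rin sub_nodes[OF \<open>Sub T' \<in> set es\<close>, of q] by auto
    moreover have "nodes T = {q}" using a by (simp add: is_tree_def)
    ultimately have "root T' = q" by simp
    moreover have "q \<notin> nodes T'" using a Te ne \<open>Sub T' \<in> set es\<close> by (auto simp: is_tree_def)
    ultimately show False using \<open>root T' \<in> nodes T'\<close> by simp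
  qed
qed

lemma OPT_single: "OPT m al be ga {q} q = 0"
proof -
  have "{cost m al be ga T | T. is_tree T {q} q} = {0}"
  proof (intro equalityI subsetI)
    fix x assume "x \<in> {cost m al be ga T | T. is_tree T {q} q}"
    then obtain T where "x = cost m al be ga T" "is_tree T {q} q" by blast
    then show "x \<in> {0}" using single_tree[of T q] by simp
  next
    fix x assume x: "x \<in> {0::real}"
    have "is_tree (CT q []) {q} q" by (simp add: is_tree_def)
    then show "x \<in> {cost m al be ga T | T. is_tree T {q} q}" using x by force
  qed
  then show ?thesis by (simp add: OPT_def)
qed

lemma normalize:
  assumes "wf_tree (CT r es)" "es \<noteq> []" "ga r * m r \<ge> 0"
  shows "\<exists>es0 Tb. wf_tree (CT r (es0 @ [Sub Tb])) \<and> nodes (CT r (es0 @ [Sub Tb])) = nodes (CT r es)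
     \<and> costs m al be ga r 0 (es0 @ [Sub Tb]) \<le> costs m al be ga r 0 es"
proof -
  show ?thesis
  proof (cases "last es")
    case (Sub Tb)
    have eq: "butlast es @ [Sub Tb] = es" using append_butlast_last_id[OF assms(2)] unfolding Sub .
    have "wf_tree (CT r (butlast es @ [Sub Tb])) \<and> nodes (CT r (butlast es @ [Sub Tb])) = nodes (CT r es)
     \<and> costs m al be ga r 0 (butlast es @ [Sub Tb]) \<le> costs m al be ga r 0 es"
      unfolding eq using assms(1) by simp
    then show ?thesis by blast
  next
    case LocalCopy
    define es1 where "es1 = butlast es"
    have es': "es = es1 @ [LocalCopy]" using append_butlast_last_id[OF assms(2)] unfolding es1_def LocalCopy by simp
    have "length (filter (\<lambda>e. e = LocalCopy) es) = 1" using assms by simp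
    then have f1: "filter (\<lambda>e. e = LocalCopy) es1 = []" using es' by simp
    then have nlc: "LocalCopy \<notin> set es1" by (auto simp: filter_empty_conv)
    have "subtrees es \<noteq> []" using assms by simp
    then have ne1: "es1 \<noteq> []" using es' by auto
    have "last es1 \<in> set es1" using ne1 by simp
    then have "last es1 \<noteq> LocalCopy" using nlc by metis
    then obtain Tb where lt: "last es1 = Sub Tb" by (cases "last es1") auto
    define es0 where "es0 = LocalCopy # butlast es1"
    have "butlast es1 @ [Sub Tb] = es1" using append_butlast_last_id[OF ne1] unfolding lt .
    then have eq: "es0 @ [Sub Tb] = LocalCopy # es1" unfolding es0_def by simp
    have w: "wf_tree (CT r (LocalCopy # es1))"
      by (rule wf_cong[OF assms(1)]) (use es' f1 in auto)
    have n: "nodes (CT r (LocalCopy # es1)) = nodes (CT r es)" using es' by auto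
    have c: "costs m al be ga r 0 (LocalCopy # es1) \<le> costs m al be ga r 0 es"
    proof -
      have "costs m al be ga r 0 (LocalCopy # es1) = costs m al be ga r (ga r * m r) es1" by simp
      also have "\<dots> \<le> costs m al be ga r 0 es1 + ga r * m r"
        by (rule costs_shift) (use nlc assms(3) in auto)
      also have "\<dots> = costs m al be ga r 0 es" using es' by (simp add: costs_append)
      finally show ?thesis .
    qed
    have "wf_tree (CT r (es0 @ [Sub Tb])) \<and> nodes (CT r (es0 @ [Sub Tb])) = nodes (CT r es)
     \<and> costs m al be ga r 0 (es0 @ [Sub Tb]) \<le> costs m al be ga r 0 es"
      using w n c by (simp only: eq)
    then show ?thesis by blast
  qed
qed

definition cand1 where
  "cand1 m al be ga P r = {max (ga r * m r) (OPT m al be ga (P - {r}) r') + al r' r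
                      + be r' r * Size m (P - {r}) | r'. r' \<in> P - {r}}"

definition cand2 where
  "cand2 m al be ga P r = {max (OPT m al be ga R r) (OPT m al be ga (P - R) r') + al r' r
                      + be r' r * Size m (P - R)
                    | R r'. R \<subseteq> P \<and> r \<in> R \<and> card R \<ge> 2 \<and> P - R \<noteq> {} \<and> r' \<in> P - R}"

lemma wf_parts:
  assumes "wf_tree (CT r es)" "es \<noteq> []"
  shows "length (filter (\<lambda>e. e = LocalCopy) es) = 1" "subtrees es \<noteq> []"
    "\<forall>i j. i < j \<and> j < length (subtrees es) \<longrightarrow>
           nodes (subtrees es ! i) \<inter> nodes (subtrees es ! j) = {}"
    "\<forall>e\<in>set es. r \<notin> nodes_e e" "\<forall>e\<in>set es. wf_e e"
  using assms by (simp_all only: wf_tree.simps) simp_all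

lemma nodes_snoc: "nodes (CT r (es @ [Sub T])) = nodes (CT r es) \<union> nodes T"
  by auto

lemma lower:
  assumes fin: "finite P" and wf: "wf_tree (CT r (es0 @ [Sub Tb]))"
    and nP: "nodes (CT r (es0 @ [Sub Tb])) = P"
  shows "\<exists>v \<in> cand1 m al be ga P r \<union> cand2 m al be ga P r. v \<le> costs m al be ga r 0 (es0 @ [Sub Tb])"
proof -
  let ?es = "es0 @ [Sub Tb]"
  have ne: "?es \<noteq> []" by simp
  note W = wf_parts[OF wf ne]
  have f1: "length (filter (\<lambda>e. e = LocalCopy) es0) = 1" using W(1) by simp
  have "wf_e (Sub Tb)" using W(5) by simp
  then have wfTb: "wf_tree Tb" by simp
  have "r \<notin> nodes_e (Sub Tb)" using W(4) by simp
  then have rTb: "r \<notin> nodes Tb" by simp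
  have rT: "r \<notin> nodes_e e" if "e \<in> set es0" for e using W(4) that by simp
  have wfe: "wf_e e" if "e \<in> set es0" for e using W(5) that by simp
  have dj: "\<forall>i j. i < j \<and> j < length (subtrees es0 @ [Tb]) \<longrightarrow>
      nodes ((subtrees es0 @ [Tb]) ! i) \<inter> nodes ((subtrees es0 @ [Tb]) ! j) = {}"
    using W(3) by simp
  have djTb: "nodes T' \<inter> nodes Tb = {}" if tin: "T' \<in> set (subtrees es0)" for T'
  proof -
    obtain i where i: "i < length (subtrees es0)" "subtrees es0 ! i = T'"
      using tin unfolding in_set_conv_nth by blast
    have "i < length (subtrees es0) \<and> length (subtrees es0) < length (subtrees es0 @ [Tb])"
      using i(1) by simp
    then have "nodes ((subtrees es0 @ [Tb]) ! i) \<inter> nodes ((subtrees es0 @ [Tb]) ! (length (subtrees es0))) = {}"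
      using dj by blast
    then show ?thesis using i by (simp add: nth_append)
  qed
  have R_Tb: "nodes (CT r es0) \<inter> nodes Tb = {}"
  proof -
    have "nodes_e e \<inter> nodes Tb = {}" if "e \<in> set es0" for e
    proof (cases e)
      case LocalCopy then show ?thesis by simp
    next
      case (Sub T')
      then have "T' \<in> set (subtrees es0)" using that by (simp add: set_subtrees)
      then show ?thesis using djTb Sub by simp
    qed
    then show ?thesis using rTb by auto
  qed
  have Pu: "P = nodes (CT r es0) \<union> nodes Tb" using nP nodes_snoc[of r es0 Tb] by simp
  have PR: "P - nodes (CT r es0) = nodes Tb" using Pu R_Tb by blast
  have cst: "costs m al be ga r 0 ?es = max (costs m al be ga r 0 es0) (cost m al be ga Tb)
      + al (root Tb) r + be (root Tb) r * Size m (nodes Tb)"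
    by (simp add: costs_append)
  have isTb: "is_tree Tb (nodes Tb) (root Tb)" using wfTb by (simp add: is_tree_def)
  have "nodes Tb \<subseteq> P" using Pu by blast
  then have finTb: "finite (nodes Tb)" using fin by (rule finite_subset)
  have optTb: "OPT m al be ga (nodes Tb) (root Tb) \<le> cost m al be ga Tb"
    by (rule OPT_le[OF finTb isTb])
  show ?thesis
  proof (cases "subtrees es0 = []")
    case True
    have allLC: "\<forall>e\<in>set es0. e = LocalCopy"
    proof
      fix e assume e: "e \<in> set es0" show "e = LocalCopy"
      proof (cases e)
        case (Sub T')
        then have "T' \<in> set (subtrees es0)" using e by (simp add: set_subtrees)
        then show ?thesis using True by simp
      qed simp
    qed
    then have "filter (\<lambda>e. e = LocalCopy) es0 = es0" by (simp add: filter_id_conv)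
    then have "length es0 = 1" using f1 by simp
    then obtain e where "es0 = [e]" by (cases es0) auto
    then have es0: "es0 = [LocalCopy]" using allLC by simp
    have Pr: "P - {r} = nodes Tb" using PR es0 by simp
    define v where "v = max (ga r * m r) (OPT m al be ga (P - {r}) (root Tb)) + al (root Tb) r
                      + be (root Tb) r * Size m (P - {r})"
    have "root Tb \<in> P - {r}" using Pr root_in[of Tb] by simp
    then have "v \<in> cand1 m al be ga P r" unfolding cand1_def v_def by blast
    moreover have "v \<le> costs m al be ga r 0 ?es"
    proof -
      have "costs m al be ga r 0 es0 = ga r * m r" using es0 by simp
      then show ?thesis using optTb Pr cst by (simp add: v_def max_def)
    qed
    ultimately show ?thesis by blast
  next
    case False
    define R where "R = nodes (CT r es0)"
    have es0ne: "es0 \<noteq> []" using False by auto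
    have dj0: "\<forall>i j. i < j \<and> j < length (subtrees es0) \<longrightarrow>
         nodes (subtrees es0 ! i) \<inter> nodes (subtrees es0 ! j) = {}"
    proof (intro allI impI)
      fix i j assume ij: "i < j \<and> j < length (subtrees es0)"
      then have "nodes ((subtrees es0 @ [Tb]) ! i) \<inter> nodes ((subtrees es0 @ [Tb]) ! j) = {}"
        using dj by simp
      then show "nodes (subtrees es0 ! i) \<inter> nodes (subtrees es0 ! j) = {}"
        using ij by (simp add: nth_append)
    qed
    have wf0: "wf_tree (CT r es0)"
      unfolding wf_tree.simps using f1 False dj0 rT wfe by blast
    obtain T1 where T1: "T1 \<in> set (subtrees es0)" using False by (cases "subtrees es0") auto
    then have ST1: "Sub T1 \<in> set es0" by (simp add: set_subtrees)
    have "r \<notin> nodes T1" using rT[OF ST1] by simp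
    then have rne: "root T1 \<noteq> r" using root_in[of T1] by metis
    have "root T1 \<in> R" unfolding R_def using sub_nodes[OF ST1, of r] root_in[of T1] by blast
    moreover have "r \<in> R" by (simp add: R_def)
    moreover have RP: "R \<subseteq> P" using Pu R_def by blast
    moreover have finR: "finite R" using fin RP by (rule finite_subset[rotated])
    ultimately have cR: "card R \<ge> 2"
      using card_mono[of R "{r, root T1}"] rne by simp
    have PR': "P - R = nodes Tb" using PR R_def by simp
    define v where "v = max (OPT m al be ga R r) (OPT m al be ga (P - R) (root Tb)) + al (root Tb) r
                      + be (root Tb) r * Size m (P - R)"
    have "R \<subseteq> P \<and> r \<in> R \<and> card R \<ge> 2 \<and> P - R \<noteq> {} \<and> root Tb \<in> P - R"
      using RP cR PR' root_in[of Tb] \<open>r \<in> R\<close> by auto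
    then have "v \<in> cand2 m al be ga P r" unfolding cand2_def v_def by blast
    moreover have "v \<le> costs m al be ga r 0 ?es"
    proof -
      have "is_tree (CT r es0) R r" using wf0 by (simp add: is_tree_def R_def)
      then have "OPT m al be ga R r \<le> cost m al be ga (CT r es0)"
        by (rule OPT_le[OF finR])
      then have "OPT m al be ga R r \<le> costs m al be ga r 0 es0" by simp
      then show ?thesis using cst PR' optTb by (simp add: v_def max_def)
    qed
    ultimately show ?thesis by blast
  qed
qed

lemma upper:
  assumes fin: "finite P" and rP: "r \<in> P" and v: "v \<in> cand1 m al be ga P r \<union> cand2 m al be ga P r"
  shows "OPT m al be ga P r \<le> v"
  using v
proof
  assume "v \<in> cand1 m al be ga P r"
  then obtain r' where r': "r' \<in> P - {r}" and vd: "v = max (ga r * m r) (OPT m al be ga (P - {r}) r') + al r' r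
                      + be r' r * Size m (P - {r})" by (auto simp: cand1_def)
  obtain T' where T': "is_tree T' (P - {r}) r'" "cost m al be ga T' = OPT m al be ga (P - {r}) r'"
    using OPT_ex[of "P - {r}" r' m al be ga] fin r' by blast
  have "is_tree (CT r [LocalCopy, Sub T']) P r" using T' rP by (auto simp: is_tree_def)
  then have "OPT m al be ga P r \<le> cost m al be ga (CT r [LocalCopy, Sub T'])" by (rule OPT_le[OF fin])
  also have "\<dots> = v" using T' vd by (simp add: is_tree_def)
  finally show ?thesis .
next
  assume "v \<in> cand2 m al be ga P r"
  then obtain R r' where R: "R \<subseteq> P" "r \<in> R" "card R \<ge> 2" "P - R \<noteq> {}" "r' \<in> P - R"
    and vd: "v = max (OPT m al be ga R r) (OPT m al be ga (P - R) r') + al r' r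
                      + be r' r * Size m (P - R)" by (auto simp: cand2_def)
  have finR: "finite R" using fin R(1) finite_subset by blast
  obtain TR where TR: "is_tree TR R r" "cost m al be ga TR = OPT m al be ga R r"
    using OPT_ex[OF finR R(2), of m al be ga] by blast
  obtain T' where T': "is_tree T' (P - R) r'" "cost m al be ga T' = OPT m al be ga (P - R) r'"
    using OPT_ex[of "P - R" r' m al be ga] fin R(5) by blast
  obtain es where es: "TR = CT r es" using TR by (cases TR) (auto simp: is_tree_def)
  have "es \<noteq> []"
  proof
    assume "es = []" then have "R = {r}" using TR es by (auto simp: is_tree_def)
    then show False using R(3) by simp
  qed
  have wfn: "wf_tree (CT r (es @ [Sub T']))"
    by (rule wf_append) (use TR T' es \<open>es \<noteq> []\<close> in \<open>auto simp: is_tree_def\<close>)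
  have "is_tree (CT r (es @ [Sub T'])) P r"
    using wfn TR T' es R(1) by (auto simp: is_tree_def)
  then have "OPT m al be ga P r \<le> cost m al be ga (CT r (es @ [Sub T']))" by (rule OPT_le[OF fin])
  also have "\<dots> = v" using TR T' vd es by (simp add: is_tree_def costs_append)
  finally show ?thesis .
qed

lemma main:
  assumes fin: "finite P" and rP: "r \<in> P" and c2: "card P \<ge> 2" and g: "ga r * m r \<ge> 0"
  shows "OPT m al be ga P r = Min (cand1 m al be ga P r \<union> cand2 m al be ga P r)"
proof -
  let ?S = "cand1 m al be ga P r \<union> cand2 m al be ga P r"
  have f1: "finite (cand1 m al be ga P r)" unfolding cand1_def using fin by simp
  have sub2: "cand2 m al be ga P r \<subseteq> (\<lambda>(R, r'). max (OPT m al be ga R r) (OPT m al be ga (P - R) r') + al r' r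
                      + be r' r * Size m (P - R)) ` (Pow P \<times> P)"
    unfolding cand2_def by (auto simp: image_iff)
  have "finite ((\<lambda>(R, r'). max (OPT m al be ga R r) (OPT m al be ga (P - R) r') + al r' r
                      + be r' r * Size m (P - R)) ` (Pow P \<times> P))" using fin by simp
  then have f2: "finite (cand2 m al be ga P r)" using sub2 by (rule finite_subset[rotated])
  have finS: "finite ?S" using f1 f2 by simp
  obtain T where T: "is_tree T P r" "cost m al be ga T = OPT m al be ga P r"
    using OPT_ex[OF fin rP] by blast
  obtain es where es: "T = CT r es" using T by (cases T) (auto simp: is_tree_def)
  have "es \<noteq> []"
  proof
    assume "es = []" then have "P = {r}" using T es by (auto simp: is_tree_def)
    then show False using c2 by simp
  qed
  have wfT: "wf_tree (CT r es)" and nT: "nodes (CT r es) = P" using T es by (simp_all add: is_tree_def)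
  obtain es0 Tb where n: "wf_tree (CT r (es0 @ [Sub Tb]))" "nodes (CT r (es0 @ [Sub Tb])) = nodes (CT r es)"
     "costs m al be ga r 0 (es0 @ [Sub Tb]) \<le> costs m al be ga r 0 es"
    using normalize[of r es ga m al be, OF wfT \<open>es \<noteq> []\<close> g] by blast
  note n = n(1) n(2)[unfolded nT] n(3)
  obtain v where v: "v \<in> ?S" "v \<le> costs m al be ga r 0 (es0 @ [Sub Tb])"
    using lower[OF fin n(1) n(2)] by blast
  have "v \<le> OPT m al be ga P r" using v n(3) T es by simp
  then have le1: "Min ?S \<le> OPT m al be ga P r" using Min_le[OF finS v(1)] by linarith
  have ne: "?S \<noteq> {}" using v(1) by blast
  have "OPT m al be ga P r \<le> Min ?S" using upper[OF fin rP] Min_in[OF finS ne] by blast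
  then show ?thesis using le1 by simp
qed

theorem corollary1:
  fixes p :: nat
    and m :: "nat \<Rightarrow> real"
    and al be :: "nat \<Rightarrow> nat \<Rightarrow> real"
    and ga :: "nat \<Rightarrow> real"
  assumes m_nonneg: "\<And>i. i < p \<Longrightarrow> m i \<ge> 0"
    and al_nonneg: "\<And>i j. i < p \<Longrightarrow> j < p \<Longrightarrow> i \<noteq> j \<Longrightarrow> al i j \<ge> 0"
    and be_nonneg: "\<And>i j. i < p \<Longrightarrow> j < p \<Longrightarrow> i \<noteq> j \<Longrightarrow> be i j \<ge> 0"
    and ga_nonneg: "\<And>i. i < p \<Longrightarrow> ga i \<ge> 0"
  shows "(\<forall>q<p. OPT m al be ga {q} q = 0) \<and>
         (\<forall>P r. P \<subseteq> {0..<p} \<and> r \<in> P \<and> card P \<ge> 2 \<longrightarrow>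
            OPT m al be ga P r =
              Min ({max (ga r * m r) (OPT m al be ga (P - {r}) r') + al r' r
                      + be r' r * Size m (P - {r}) | r'. r' \<in> P - {r}}
                   \<union>
                   {max (OPT m al be ga R r) (OPT m al be ga (P - R) r') + al r' r
                      + be r' r * Size m (P - R)
                    | R r'. R \<subseteq> P \<and> r \<in> R \<and> card R \<ge> 2 \<and> P - R \<noteq> {} \<and> r' \<in> P - R}))"
proof (intro conjI allI impI)
  fix q show "OPT m al be ga {q} q = 0" by (rule OPT_single)
next
  fix P r assume a: "P \<subseteq> {0..<p} \<and> r \<in> P \<and> card P \<ge> 2"
  then have fin: "finite P" using finite_subset by blast
  have rp: "r < p" using a by auto
  have g: "ga r * m r \<ge> 0" using m_nonneg[OF rp] ga_nonneg[OF rp] by simp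
  have "OPT m al be ga P r = Min (cand1 m al be ga P r \<union> cand2 m al be ga P r)"
    using main[of P r ga m al be] fin a g by blast
  then show "OPT m al be ga P r = Min ({max (ga r * m r) (OPT m al be ga (P - {r}) r') + al r' r
                      + be r' r * Size m (P - {r}) | r'. r' \<in> P - {r}}
                   \<union>
                   {max (OPT m al be ga R r) (OPT m al be ga (P - R) r') + al r' r
                      + be r' r * Size m (P - R)
                    | R r'. R \<subseteq> P \<and> r \<in> R \<and> card R \<ge> 2 \<and> P - R \<noteq> {} \<and> r' \<in> P - R})"
    by (simp only: cand1_def cand2_def)
qed

end
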